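(* Let $\Sigma$ be an alphabet and $\mathcal{A}$ a reversible weighted automaton over $\mathbb{F}_2$ and $\Sigma$ with precisely one initial state. Then $\|\mathcal{A}\|=\underline{L}$ (characteristic series over $\mathbb{F}_2$) for some $L\in\mathrm{RevL}_1(\mathbb{B},\Sigma)$. As a consequence, $\mathrm{RevL}_1(\mathbb{F}_2,\Sigma)=\mathrm{RevL}_1(\mathbb{B},\Sigma)$.
   Context: $\mathbb{F}_2$ is the two-element field and $\mathbb{B}=(\{0,1\},\lor,\land,0,1)$ the Boolean semiring. For a semiring $S$ and finite nonempty alphabet $\Sigma$, a series is a map $r\colon\Sigma^*\to S$ with value $(r,w)$, support $\mathrm{supp}(r)=\{w\mid(r,w)\neq0\}$; the characteristic series $\underline{L}$ of $L\subseteq\Sigma^*$ has coefficient $1$ on $L$ and $0$ elsewhere. A weighted automaton over $S$ and $\Sigma$ is $\mathcal{A}=(Q,\sigma,\iota,\tau)$ with $Q$ finite, $\sigma\colon Q\times\Sigma\times Q\to S$, $\iota,\tau\colon Q\to S$; a run on $w=a_1\cdots a_t$ is $q_0a_1q_1\cdots a_tq_t$ with all $\sigma(q_{k-1},a_k,q_k)\neq0$, of weight $\iota(q_0)\sigma(q_0,a_1,q_1)\cdots\sigma(q_{t-1},a_t,q_t)\tau(q_t)$, and $(\|\mathcal{A}\|,w)$ is the sum of weights of all runs on $w$. An initial state is a state $q$ with $\iota(q)\neq0$. $\mathcal{A}$ is reversible if for all $p,p',q,q'\in Q$, $a\in\Sigma$: $\sigma(p,a,q)\neq0\neq\sigma(p,a,q')$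 implies $q=q'$, and $\sigma(p,a,q)\neq0\neq\sigma(p',a,q)$ implies $p=p'$. $\mathrm{RevL}_1(S,\Sigma)$ is the set of supports of series realised by reversible weighted automata over $S$ and $\Sigma$ with precisely one initial state. *)

theory Defs
  imports Main "HOL-Library.Z2"
begin

text \<open>The two-element field F_2 is the library type bit (HOL-Library.Z2).
  The Boolean semiring B = ({0,1}, or, and, 0, 1) is introduced as a new type.\<close>

typedef boolsr = "UNIV :: bool set" ..

setup_lifting type_definition_boolsr

instantiation boolsr :: comm_semiring_1
begin
lift_definition zero_boolsr :: boolsr is False .
lift_definition one_boolsr :: boolsr is True .
lift_definition plus_boolsr :: "boolsr \<Rightarrow> boolsr \<Rightarrow> boolsr" is "(\<or>)" .
lift_definition times_boolsr :: "boolsr \<Rightarrow> boolsr \<Rightarrow> boolsr" is "(\<and>)" .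
instance by standard (transfer; auto)+
end

text \<open>The functions are given on the whole state type; the
  well-formedness predicate says Q is finite and all nonzero weights live on Q.\<close>

definition weighted_automaton ::
  "'q set \<Rightarrow> ('q \<Rightarrow> 'a \<Rightarrow> 'q \<Rightarrow> 'k::zero) \<Rightarrow> ('q \<Rightarrow> 'k) \<Rightarrow> ('q \<Rightarrow> 'k) \<Rightarrow> bool" where
  "weighted_automaton Q \<sigma> \<iota> \<tau> \<longleftrightarrow> finite Q \<and>
     (\<forall>p a q. \<sigma> p a q \<noteq> 0 \<longrightarrow> p \<in> Q \<and> q \<in> Q) \<and>
     (\<forall>q. \<iota> q \<noteq> 0 \<longrightarrow> q \<in> Q) \<and> (\<forall>q. \<tau> q \<noteq> 0 \<longrightarrow> q \<in> Q)"

definition runs :: "'q set \<Rightarrow> ('q \<Rightarrow> 'a \<Rightarrow> 'q \<Rightarrow> 'k::zero) \<Rightarrow> 'a list \<Rightarrow> 'q list set" where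
  "runs Q \<sigma> w = {qs. length qs = Suc (length w) \<and> set qs \<subseteq> Q \<and>
     (\<forall>k < length w. \<sigma> (qs ! k) (w ! k) (qs ! Suc k) \<noteq> 0)}"

definition run_weight ::
  "('q \<Rightarrow> 'a \<Rightarrow> 'q \<Rightarrow> 'k::comm_semiring_1) \<Rightarrow> ('q \<Rightarrow> 'k) \<Rightarrow> ('q \<Rightarrow> 'k) \<Rightarrow> 'a list \<Rightarrow> 'q list \<Rightarrow> 'k" where
  "run_weight \<sigma> \<iota> \<tau> w qs =
     \<iota> (qs ! 0) * (\<Prod>k < length w. \<sigma> (qs ! k) (w ! k) (qs ! Suc k)) * \<tau> (qs ! length w)"

definition behaviour ::
  "'q set \<Rightarrow> ('q \<Rightarrow> 'a \<Rightarrow> 'q \<Rightarrow> 'k::comm_semiring_1) \<Rightarrow> ('q \<Rightarrow> 'k) \<Rightarrow> ('q \<Rightarrow> 'k) \<Rightarrow> 'a list \<Rightarrow> 'k" where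
  "behaviour Q \<sigma> \<iota> \<tau> w = (\<Sum>qs \<in> runs Q \<sigma> w. run_weight \<sigma> \<iota> \<tau> w qs)"

definition supp :: "('a list \<Rightarrow> 'k::zero) \<Rightarrow> 'a list set" where
  "supp r = {w. r w \<noteq> 0}"

definition char_series :: "'a list set \<Rightarrow> 'a list \<Rightarrow> 'k::zero_neq_one" where
  "char_series L w = (if w \<in> L then 1 else 0)"

definition reversible :: "('q \<Rightarrow> 'a \<Rightarrow> 'q \<Rightarrow> 'k::zero) \<Rightarrow> bool" where
  "reversible \<sigma> \<longleftrightarrow>
     (\<forall>p q q' a. \<sigma> p a q \<noteq> 0 \<and> \<sigma> p a q' \<noteq> 0 \<longrightarrow> q = q') \<and>
     (\<forall>p p' q a. \<sigma> p a q \<noteq> 0 \<and> \<sigma> p' a q \<noteq> 0 \<longrightarrow> p = p')"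

definition one_initial :: "('q \<Rightarrow> 'k::zero) \<Rightarrow> bool" where
  "one_initial \<iota> \<longleftrightarrow> (\<exists>!q. \<iota> q \<noteq> 0)"

text \<open>Any finite state set can be renamed into nat, so
  state sets are taken to be finite subsets of nat.\<close>

definition RevL1 :: "'k::comm_semiring_1 itself \<Rightarrow> 'a list set set" where
  "RevL1 _ = {supp (behaviour Q \<sigma> \<iota> \<tau>) | (Q :: nat set) (\<sigma> :: nat \<Rightarrow> 'a \<Rightarrow> nat \<Rightarrow> 'k) \<iota> \<tau>.
      weighted_automaton Q \<sigma> \<iota> \<tau> \<and> reversible \<sigma> \<and> one_initial \<iota>}"

end

theory Submission
  imports Defs
begin

definition acc :: "'q set \<Rightarrow> ('q \<Rightarrow> 'a \<Rightarrow> 'q \<Rightarrow> 'k::zero) \<Rightarrow> ('q \<Rightarrow> 'k) \<Rightarrow> ('q \<Rightarrow> 'k) \<Rightarrow> 'a list \<Rightarrow> bool" where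
  "acc Q \<sigma> \<iota> \<tau> w \<longleftrightarrow> (\<exists>qs\<in>runs Q \<sigma> w. \<iota> (qs!0) \<noteq> 0 \<and> \<tau> (qs ! length w) \<noteq> 0)"

lemma runs_unique:
  assumes det: "\<forall>p q q' a. \<sigma> p a q \<noteq> 0 \<and> \<sigma> p a q' \<noteq> 0 \<longrightarrow> q = q'"
    and r1: "qs \<in> runs Q \<sigma> w" and r2: "qs' \<in> runs Q \<sigma> w" and h0: "qs!0 = qs'!0"
  shows "qs = qs'"
proof -
  have "\<forall>k. k \<le> length w \<longrightarrow> qs!k = qs'!k"
  proof
    fix k show "k \<le> length w \<longrightarrow> qs!k = qs'!k"
    proof (induction k)
      case 0 then show ?case using h0 by simp
    next
      case (Suc k)
      show ?case
      proof
        assume k: "Suc k \<le> length w"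
        then have "\<sigma> (qs!k) (w!k) (qs!Suc k) \<noteq> 0" "\<sigma> (qs'!k) (w!k) (qs'!Suc k) \<noteq> 0"
          using r1 r2 unfolding runs_def by auto
        moreover have "qs!k = qs'!k" using Suc k by simp
        ultimately show "qs!Suc k = qs'!Suc k" using det by metis
      qed
    qed
  qed
  moreover have "length qs = Suc (length w)" "length qs' = Suc (length w)"
    using r1 r2 unfolding runs_def by auto
  ultimately show ?thesis by (intro nth_equalityI) auto
qed

lemma runs_finite: "finite Q \<Longrightarrow> finite (runs Q \<sigma> w)"
proof -
  assume "finite Q"
  then have "finite {xs. set xs \<subseteq> Q \<and> length xs = Suc (length w)}"
    using finite_lists_length_eq by blast
  then show ?thesis by (rule finite_subset[rotated]) (auto simp: runs_def)
qed

lemma behaviour_two: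
  fixes \<sigma> :: "'q \<Rightarrow> 'a \<Rightarrow> 'q \<Rightarrow> 'k::comm_semiring_1"
  assumes two: "\<forall>x::'k. x \<noteq> 0 \<longrightarrow> x = 1"
    and fin: "finite Q" and rev: "reversible \<sigma>" and oi: "one_initial \<iota>"
  shows "behaviour Q \<sigma> \<iota> \<tau> w = (if acc Q \<sigma> \<iota> \<tau> w then 1 else 0)"
proof (cases "acc Q \<sigma> \<iota> \<tau> w")
  case True
  then obtain qs0 where q0: "qs0 \<in> runs Q \<sigma> w" "\<iota> (qs0!0) \<noteq> 0" "\<tau> (qs0 ! length w) \<noteq> 0"
    unfolding acc_def by blast
  have det: "\<forall>p q q' a. \<sigma> p a q \<noteq> 0 \<and> \<sigma> p a q' \<noteq> 0 \<longrightarrow> q = q'"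
    using rev unfolding reversible_def by blast
  have z: "run_weight \<sigma> \<iota> \<tau> w qs = 0" if "qs \<in> runs Q \<sigma> w - {qs0}" for qs
  proof (cases "\<iota> (qs!0) = 0")
    case True then show ?thesis by (simp add: run_weight_def)
  next
    case False
    then have "qs!0 = qs0!0" using oi q0(2) unfolding one_initial_def by blast
    then have "qs = qs0" using runs_unique[OF det] that q0(1) by blast
    then show ?thesis using that by simp
  qed
  have w1: "run_weight \<sigma> \<iota> \<tau> w qs0 = 1"
  proof -
    have "\<forall>k<length w. \<sigma> (qs0 ! k) (w ! k) (qs0 ! Suc k) = 1"
      using q0(1) two unfolding runs_def by auto
    then have "(\<Prod>k < length w. \<sigma> (qs0 ! k) (w ! k) (qs0 ! Suc k)) = 1" by simp
    moreover have "\<iota> (qs0!0) = 1" "\<tau> (qs0 ! length w) = 1" using q0 two by auto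
    ultimately show ?thesis by (simp add: run_weight_def)
  qed
  have "behaviour Q \<sigma> \<iota> \<tau> w = run_weight \<sigma> \<iota> \<tau> w qs0 + (\<Sum>qs \<in> runs Q \<sigma> w - {qs0}. run_weight \<sigma> \<iota> \<tau> w qs)"
    unfolding behaviour_def using sum.remove[OF runs_finite[OF fin] q0(1)] by blast
  also have "\<dots> = 1" using z w1 by simp
  finally show ?thesis using True by simp
next
  case False
  then have "\<forall>qs\<in>runs Q \<sigma> w. run_weight \<sigma> \<iota> \<tau> w qs = 0"
    unfolding acc_def run_weight_def by auto
  then show ?thesis using False unfolding behaviour_def by simp
qed

lemma supp_two:
  fixes \<sigma> :: "'q \<Rightarrow> 'a \<Rightarrow> 'q \<Rightarrow> 'k::comm_semiring_1"
  assumes two: "\<forall>x::'k. x \<noteq> 0 \<longrightarrow> x = 1" and nz: "(0::'k) \<noteq> 1"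
    and fin: "finite Q" and rev: "reversible \<sigma>" and oi: "one_initial \<iota>"
  shows "supp (behaviour Q \<sigma> \<iota> \<tau>) = {w. acc Q \<sigma> \<iota> \<tau> w}"
  using behaviour_two[OF two fin rev oi] nz unfolding supp_def by auto

lemma acc_transfer:
  assumes gf: "\<forall>x\<in>Q. g (f x) = x"
    and s: "\<forall>p a q. \<sigma>' p a q \<noteq> 0 \<longleftrightarrow> p \<in> f`Q \<and> q \<in> f`Q \<and> \<sigma> (g p) a (g q) \<noteq> 0"
    and i: "\<forall>p. \<iota>' p \<noteq> 0 \<longleftrightarrow> p \<in> f`Q \<and> \<iota> (g p) \<noteq> 0"
    and t: "\<forall>p. \<tau>' p \<noteq> 0 \<longleftrightarrow> p \<in> f`Q \<and> \<tau> (g p) \<noteq> 0"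
  shows "acc (f`Q) \<sigma>' \<iota>' \<tau>' w = acc Q \<sigma> \<iota> \<tau> w"
proof
  assume "acc (f`Q) \<sigma>' \<iota>' \<tau>' w"
  then obtain qs where q: "qs \<in> runs (f`Q) \<sigma>' w" "\<iota>' (qs!0) \<noteq> 0" "\<tau>' (qs ! length w) \<noteq> 0"
    unfolding acc_def by blast
  have len: "length qs = Suc (length w)" and sq: "set qs \<subseteq> f`Q"
    and st: "\<forall>k<length w. \<sigma>' (qs ! k) (w ! k) (qs ! Suc k) \<noteq> 0"
    using q(1) unfolding runs_def by auto
  have "map g qs \<in> runs Q \<sigma> w"
    unfolding runs_def using len sq st s gf by auto
  moreover have "\<iota> (map g qs ! 0) \<noteq> 0" using q(2) i len by simp
  moreover have "\<tau> (map g qs ! length w) \<noteq> 0" using q(3) t len by simp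
  ultimately show "acc Q \<sigma> \<iota> \<tau> w" unfolding acc_def by blast
next
  assume "acc Q \<sigma> \<iota> \<tau> w"
  then obtain qs where q: "qs \<in> runs Q \<sigma> w" "\<iota> (qs!0) \<noteq> 0" "\<tau> (qs ! length w) \<noteq> 0"
    unfolding acc_def by blast
  have len: "length qs = Suc (length w)" and sq: "set qs \<subseteq> Q"
    and st: "\<forall>k<length w. \<sigma> (qs ! k) (w ! k) (qs ! Suc k) \<noteq> 0"
    using q(1) unfolding runs_def by auto
  have inq: "qs ! k \<in> Q" if "k \<le> length w" for k using sq len that by auto
  have "map f qs \<in> runs (f`Q) \<sigma>' w"
    unfolding runs_def using len sq st s gf inq by auto
  moreover have "\<iota>' (map f qs ! 0) \<noteq> 0" using q(2) i len gf inq[of 0] by simp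
  moreover have "\<tau>' (map f qs ! length w) \<noteq> 0" using q(3) t len gf inq[of "length w"] by simp
  ultimately show "acc (f`Q) \<sigma>' \<iota>' \<tau>' w" unfolding acc_def by blast
qed


lemma rename:
  fixes \<sigma> :: "'q \<Rightarrow> 'a \<Rightarrow> 'q \<Rightarrow> 'k::comm_semiring_1"
  assumes nz: "(0::'m::comm_semiring_1) \<noteq> 1"
    and wa: "weighted_automaton Q \<sigma> \<iota> \<tau>" and rev: "reversible \<sigma>" and oi: "one_initial \<iota>"
  shows "\<exists>(Q'::nat set) (\<sigma>'::nat \<Rightarrow> 'a \<Rightarrow> nat \<Rightarrow> 'm) \<iota>' \<tau>'. weighted_automaton Q' \<sigma>' \<iota>' \<tau>'
     \<and> reversible \<sigma>' \<and> one_initial \<iota>' \<and> (\<forall>w. acc Q' \<sigma>' \<iota>' \<tau>' w = acc Q \<sigma> \<iota> \<tau> w)"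
proof -
  have fin: "finite Q" using wa unfolding weighted_automaton_def by blast
  obtain f :: "'q \<Rightarrow> nat" and n where fQ: "f`Q = {i. i<n}" and inj: "inj_on f Q"
    using finite_imp_inj_to_nat_seg[OF fin] by blast
  define g where "g = inv_into Q f"
  have gf: "\<forall>x\<in>Q. g (f x) = x" using inj unfolding g_def by simp
  have fg: "\<And>p. p \<in> f`Q \<Longrightarrow> f (g p) = p" unfolding g_def by (simp add: f_inv_into_f)
  have gQ: "\<And>p. p \<in> f`Q \<Longrightarrow> g p \<in> Q" unfolding g_def by (simp add: inv_into_into)
  define \<sigma>' :: "nat \<Rightarrow> 'a \<Rightarrow> nat \<Rightarrow> 'm" where
    "\<sigma>' = (\<lambda>p a q. if p \<in> f`Q \<and> q \<in> f`Q \<and> \<sigma> (g p) a (g q) \<noteq> 0 then 1 else 0)"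
  define \<iota>' :: "nat \<Rightarrow> 'm" where "\<iota>' = (\<lambda>p. if p \<in> f`Q \<and> \<iota> (g p) \<noteq> 0 then 1 else 0)"
  define \<tau>' :: "nat \<Rightarrow> 'm" where "\<tau>' = (\<lambda>p. if p \<in> f`Q \<and> \<tau> (g p) \<noteq> 0 then 1 else 0)"
  have s: "\<forall>p a q. \<sigma>' p a q \<noteq> 0 \<longleftrightarrow> p \<in> f`Q \<and> q \<in> f`Q \<and> \<sigma> (g p) a (g q) \<noteq> 0"
    using nz unfolding \<sigma>'_def by auto
  have i: "\<forall>p. \<iota>' p \<noteq> 0 \<longleftrightarrow> p \<in> f`Q \<and> \<iota> (g p) \<noteq> 0" using nz unfolding \<iota>'_def by auto
  have t: "\<forall>p. \<tau>' p \<noteq> 0 \<longleftrightarrow> p \<in> f`Q \<and> \<tau> (g p) \<noteq> 0" using nz unfolding \<tau>'_def by auto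
  have "weighted_automaton (f`Q) \<sigma>' \<iota>' \<tau>'"
    unfolding weighted_automaton_def
  proof (intro conjI allI impI)
    show "finite (f`Q)" using fin by simp
  next
    fix p a q assume "\<sigma>' p a q \<noteq> 0" then show "p \<in> f`Q" using s by simp
  next
    fix p a q assume "\<sigma>' p a q \<noteq> 0" then show "q \<in> f`Q" using s by simp
  next
    fix q assume "\<iota>' q \<noteq> 0" then show "q \<in> f`Q" using i by simp
  next
    fix q assume "\<tau>' q \<noteq> 0" then show "q \<in> f`Q" using t by simp
  qed
  moreover have "reversible \<sigma>'"
  proof -
    have r1: "\<forall>p q q' a. \<sigma> p a q \<noteq> 0 \<and> \<sigma> p a q' \<noteq> 0 \<longrightarrow> q = q'"
      and r2: "\<forall>p p' q a. \<sigma> p a q \<noteq> 0 \<and> \<sigma> p' a q \<noteq> 0 \<longrightarrow> p = p'"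
      using rev unfolding reversible_def by blast+
    show ?thesis unfolding reversible_def
    proof (intro conjI allI impI)
      fix p q q' a assume "\<sigma>' p a q \<noteq> 0 \<and> \<sigma>' p a q' \<noteq> 0"
      then have "q \<in> f`Q" "q' \<in> f`Q" "\<sigma> (g p) a (g q) \<noteq> 0" "\<sigma> (g p) a (g q') \<noteq> 0"
        using s by simp_all
      moreover have "g q = g q'" using r1 calculation(3,4) by blast
      ultimately show "q = q'" using fg by metis
    next
      fix p p' q a assume "\<sigma>' p a q \<noteq> 0 \<and> \<sigma>' p' a q \<noteq> 0"
      then have "p \<in> f`Q" "p' \<in> f`Q" "\<sigma> (g p) a (g q) \<noteq> 0" "\<sigma> (g p') a (g q) \<noteq> 0"
        using s by simp_all
      moreover have "g p = g p'" using r2 calculation(3,4) by blast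
      ultimately show "p = p'" using fg by metis
    qed
  qed
  moreover have "one_initial \<iota>'"
  proof -
    obtain q0 where q0: "\<iota> q0 \<noteq> 0" "\<And>q. \<iota> q \<noteq> 0 \<Longrightarrow> q = q0"
      using oi unfolding one_initial_def by blast
    have q0Q: "q0 \<in> Q" using wa q0(1) unfolding weighted_automaton_def by blast
    show ?thesis unfolding one_initial_def
    proof (rule ex1I[of _ "f q0"])
      have a: "f q0 \<in> f`Q" using q0Q by simp
      have b: "g (f q0) = q0" using gf q0Q by simp
      show "\<iota>' (f q0) \<noteq> 0" using i a b q0(1) by simp
    next
      fix p assume "\<iota>' p \<noteq> 0"
      then have "p \<in> f`Q" "\<iota> (g p) \<noteq> 0" using i by simp_all
      moreover have "g p = q0" using q0(2) calculation(2) by blast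
      ultimately
      show "p = f q0" using fg by metis
    qed
  qed
  moreover have "\<forall>w. acc (f`Q) \<sigma>' \<iota>' \<tau>' w = acc Q \<sigma> \<iota> \<tau> w"
    using acc_transfer[OF gf s i t] by blast
  ultimately show ?thesis
    by (intro exI[of _ "f`Q"] exI[of _ \<sigma>'] exI[of _ \<iota>'] exI[of _ \<tau>']) blast
qed

lemma bit_two: "\<forall>x::bit. x \<noteq> 0 \<longrightarrow> x = 1" by simp

lemma boolsr_two: "\<forall>x::boolsr. x \<noteq> 0 \<longrightarrow> x = 1"
  by (intro allI impI, transfer) simp

lemma boolsr_nz: "(0::boolsr) \<noteq> 1"
  by transfer simp

lemma RevL1_sub:
  assumes tk: "\<forall>x::'k::comm_semiring_1. x \<noteq> 0 \<longrightarrow> x = 1" and nk: "(0::'k) \<noteq> 1"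
    and tm: "\<forall>x::'m::comm_semiring_1. x \<noteq> 0 \<longrightarrow> x = 1" and nm: "(0::'m) \<noteq> 1"
  shows "(RevL1 TYPE('k) :: 'a list set set) \<subseteq> RevL1 TYPE('m)"
proof
  fix X :: "'a list set" assume "X \<in> RevL1 TYPE('k)"
  then obtain Q :: "nat set" and \<sigma> :: "nat \<Rightarrow> 'a \<Rightarrow> nat \<Rightarrow> 'k" and \<iota> \<tau> where
    X: "X = supp (behaviour Q \<sigma> \<iota> \<tau>)" and wa: "weighted_automaton Q \<sigma> \<iota> \<tau>"
    and rev: "reversible \<sigma>" and oi: "one_initial \<iota>"
    unfolding RevL1_def by blast
  have fin: "finite Q" using wa unfolding weighted_automaton_def by blast
  obtain Q' :: "nat set" and \<sigma>' :: "nat \<Rightarrow> 'a \<Rightarrow> nat \<Rightarrow> 'm" and \<iota>' \<tau>' where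
    r: "weighted_automaton Q' \<sigma>' \<iota>' \<tau>'" "reversible \<sigma>'" "one_initial \<iota>'"
      "\<forall>w. acc Q' \<sigma>' \<iota>' \<tau>' w = acc Q \<sigma> \<iota> \<tau> w"
    using rename[OF nm wa rev oi] by blast
  have "X = {w. acc Q \<sigma> \<iota> \<tau> w}" using X supp_two[OF tk nk fin rev oi] by simp
  also have "\<dots> = supp (behaviour Q' \<sigma>' \<iota>' \<tau>')"
  proof -
    have fin': "finite Q'" using r(1) unfolding weighted_automaton_def by blast
    show ?thesis using supp_two[OF tm nm fin' r(2) r(3)] r(4) by simp
  qed
  finally show "X \<in> RevL1 TYPE('m)" unfolding RevL1_def using r by blast
qed

theorem proposition4:
  fixes Q :: "'q set" and \<sigma> :: "'q \<Rightarrow> 'a::finite \<Rightarrow> 'q \<Rightarrow> bit"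
    and \<iota> \<tau> :: "'q \<Rightarrow> bit"
  assumes "weighted_automaton Q \<sigma> \<iota> \<tau>" and "reversible \<sigma>" and "one_initial \<iota>"
  shows "(\<exists>L \<in> RevL1 TYPE(boolsr). behaviour Q \<sigma> \<iota> \<tau> = char_series L)
    \<and> (RevL1 TYPE(bit) :: 'a list set set) = RevL1 TYPE(boolsr)"
proof
  have fin: "finite Q" using assms(1) unfolding weighted_automaton_def by blast
  obtain Q' :: "nat set" and \<sigma>' :: "nat \<Rightarrow> 'a \<Rightarrow> nat \<Rightarrow> boolsr" and \<iota>' \<tau>' where
    r: "weighted_automaton Q' \<sigma>' \<iota>' \<tau>'" "reversible \<sigma>'" "one_initial \<iota>'"
      "\<forall>w. acc Q' \<sigma>' \<iota>' \<tau>' w = acc Q \<sigma> \<iota> \<tau> w"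
    using rename[OF boolsr_nz assms] by blast
  have "supp (behaviour Q' \<sigma>' \<iota>' \<tau>') = {w. acc Q \<sigma> \<iota> \<tau> w}"
  proof -
    have fin': "finite Q'" using r(1) unfolding weighted_automaton_def by blast
    show ?thesis using supp_two[OF boolsr_two boolsr_nz fin' r(2) r(3)] r(4) by simp
  qed
  then have L: "{w. acc Q \<sigma> \<iota> \<tau> w} \<in> RevL1 TYPE(boolsr)" unfolding RevL1_def using r by blast
  have "behaviour Q \<sigma> \<iota> \<tau> = char_series {w. acc Q \<sigma> \<iota> \<tau> w}"
    using behaviour_two[OF bit_two fin assms(2,3)] by (auto simp: char_series_def)
  then show "\<exists>L \<in> RevL1 TYPE(boolsr). behaviour Q \<sigma> \<iota> \<tau> = char_series L" using L by blast
next
  show "(RevL1 TYPE(bit) :: 'a list set set) = RevL1 TYPE(boolsr)"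
  proof (rule subset_antisym)
    have "(0::bit) \<noteq> 1" by simp
    then show "(RevL1 TYPE(bit) :: 'a list set set) \<subseteq> RevL1 TYPE(boolsr)"
      using RevL1_sub[OF bit_two _ boolsr_two boolsr_nz] by blast
    show "(RevL1 TYPE(boolsr) :: 'a list set set) \<subseteq> RevL1 TYPE(bit)"
      using RevL1_sub[OF boolsr_two boolsr_nz bit_two] \<open>(0::bit) \<noteq> 1\<close> by blast
  qed
qed

end
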